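(* Let $\mathcal{H}$ be any undirected hypergraph on the vertex set $\{1,2,3\}$, and consider any network dynamical system on $\mathcal{H}$ with one-dimensional node states, smooth intrinsic dynamics $F$ and smooth, edge-dependent coupling functions $G_e$ (each invariant under permutations of its tail arguments). Then the resulting vector field on $\mathbb{R}^3$ is not equal to the Guckenheimer--Holmes vector field $$\dot x_1 = x_1 + a x_1^3 + b x_1x_2^2 + c x_1x_3^2,\quad \dot x_2 = x_2 + a x_2^3 + b x_2x_3^2 + c x_1^2x_2,\quad \dot x_3 = x_3 + a x_3^3 + b x_1^2x_3 + c x_2^2x_3$$ for any real parameters $a,b,c$ with $b\neq c$. In particular, the Guckenheimer--Holmes system cannot be realized for any parameters satisfying $a+b+c=-1$, $-\tfrac13<a<0$, $c<a<b<0$.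
   Context: A directed hypergraph on $\mathcal{V}=\{1,\dots,N\}$ is a set $\mathcal{E}$ of hyperedges $e=(T(e),H(e))$ with nonempty tail $T(e)\subseteq\mathcal{V}$ and head $H(e)\subseteq\mathcal{V}$. It is undirected if every hyperedge has the form $e=(A,A)$, $A\subseteq\mathcal V$ nonempty. A network dynamical system on $\mathcal{H}$ with one-dimensional node states is the ODE on $\mathbb{R}^N$ $$\dot x_k = F(x_k) + \sum_{e\in\mathcal{E}:\,k\in H(e)} G_e(x_k; x_{T(e)}),\qquad k=1,\dots,N,$$ where $F:\mathbb{R}\to\mathbb{R}$ is smooth, each $G_e:\mathbb{R}\times\mathbb{R}^{|T(e)|}\to\mathbb{R}$ is smooth, invariant under permutations of its last $|T(e)|$ arguments, and depends nontrivially on them; $x_{T(e)}$ denotes the vector of the $x_j$, $j\in T(e)$. (For an undirected edge $A$, node $k\in A$ thus receives $G_A(x_k;x_A)$, where $x_A$ includes $x_k$.) "Realizing" a vector field means that the network vector field equals it identically. *)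

theory Defs
  imports "HOL-Analysis.Analysis" "HOL-Combinatorics.Permutations"
begin

text \<open>C-infinity smoothness of a real-valued function on a finite-dimensional
  normed space: Frechet differentiable everywhere, and every directional
  derivative (of the derivative) is again smooth.  Since differentiable
  functions are continuous, this is exactly C-infinity.\<close>
coinductive smooth_fun :: "('a::real_normed_vector \<Rightarrow> real) \<Rightarrow> bool" where
  "(\<And>x. (f has_derivative f' x) (at x)) \<Longrightarrow> (\<And>v. smooth_fun (\<lambda>x. f' x v))
   \<Longrightarrow> smooth_fun f"

text \<open>Nodes are 1,2,3.  A state of R^3 is read off a triple.\<close>
definition st :: "real \<times> real \<times> real \<Rightarrow> nat \<Rightarrow> real" where
  "st y j = (if j = 1 then fst y else if j = 2 then fst (snd y)
             else if j = 3 then snd (snd y) else 0)"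

definition tup :: "(nat \<Rightarrow> real) \<Rightarrow> real \<times> real \<times> real" where
  "tup x = (x 1, x 2, x 3)"

text \<open>Undirected hypergraph on {1,2,3}: each hyperedge (A,A) is represented by A.\<close>
definition undirected_hypergraph3 :: "nat set set \<Rightarrow> bool" where
  "undirected_hypergraph3 E \<longleftrightarrow> (\<forall>A\<in>E. A \<noteq> {} \<and> A \<subseteq> {1,2,3})"

text \<open>Admissible coupling function for edge A: g(x_k, y) where y in R^3 is the
  state of all nodes; g is smooth, depends on y only through the tail
  coordinates y_j (j in A) (i.e. it is a smooth function on R x R^A),
  is invariant under permutations of the tail arguments, and depends
  nontrivially on them.\<close>
definition coupling :: "nat set \<Rightarrow> (real \<times> (real \<times> real \<times> real) \<Rightarrow> real) \<Rightarrow> bool" where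
  "coupling A g \<longleftrightarrow>
     smooth_fun g
   \<and> (\<forall>u y y'. (\<forall>j\<in>A. st y j = st y' j) \<longrightarrow> g (u, y) = g (u, y'))
   \<and> (\<forall>\<sigma> u y. \<sigma> permutes A \<longrightarrow> g (u, tup (st y \<circ> \<sigma>)) = g (u, y))
   \<and> (\<exists>u y y'. g (u, y) \<noteq> g (u, y'))"

definition netvf :: "(real \<Rightarrow> real) \<Rightarrow> nat set set
    \<Rightarrow> (nat set \<Rightarrow> real \<times> (real \<times> real \<times> real) \<Rightarrow> real) \<Rightarrow> (nat \<Rightarrow> real) \<Rightarrow> nat \<Rightarrow> real" where
  "netvf F E G x k = F (x k) + (\<Sum>A\<in>{A\<in>E. k \<in> A}. G A (x k, tup x))"

definition GH :: "real \<Rightarrow> real \<Rightarrow> real \<Rightarrow> (nat \<Rightarrow> real) \<Rightarrow> nat \<Rightarrow> real" where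
  "GH a b c x k =
    (if k = 1 then x 1 + a * x 1 ^ 3 + b * x 1 * x 2 ^ 2 + c * x 1 * x 3 ^ 2
     else if k = 2 then x 2 + a * x 2 ^ 3 + b * x 2 * x 3 ^ 2 + c * x 1 ^ 2 * x 2
     else x 3 + a * x 3 ^ 3 + b * x 1 ^ 2 * x 3 + c * x 2 ^ 2 * x 3)"

end

theory Submission
  imports Defs
begin

definition pt :: "real \<Rightarrow> real \<Rightarrow> nat \<Rightarrow> real" where
  "pt p q = (\<lambda>j. if j = 1 then p else if j = 2 then q else 0)"

lemma tup_pt[simp]: "tup (pt p q) = (p, q, 0)"
  by (simp add: tup_def pt_def)

lemma swap12:
  assumes "coupling A g" "1 \<in> A" "2 \<in> A"
  shows "g (s, (0, 1, 0)) = g (s, (1, 0, 0))"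
proof -
  have perm: "Transposition.transpose (1::nat) 2 permutes A" using assms permutes_swap_id by metis
  have "tup (st (1,0,0) \<circ> Transposition.transpose (1::nat) 2) = (0,1,0)"
    by (simp add: tup_def st_def)
  then show ?thesis using assms(1) perm unfolding coupling_def by metis
qed

lemma loc:
  assumes "coupling A g" "\<forall>j\<in>A. st y j = st y' j"
  shows "g (u, y) = g (u, y')"
  using assms unfolding coupling_def by blast

theorem mainTheorem1:
  fixes E :: "nat set set"
    and F :: "real \<Rightarrow> real"
    and G :: "nat set \<Rightarrow> real \<times> (real \<times> real \<times> real) \<Rightarrow> real"
    and a b c :: real
  assumes "undirected_hypergraph3 E"
    and "smooth_fun F"
    and "\<forall>A\<in>E. coupling A (G A)"
    and "b \<noteq> c"
  shows "\<not> (\<forall>x :: nat \<Rightarrow> real. \<forall>k\<in>{1,2,3}. netvf F E G x k = GH a b c x k)"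
proof
  assume H: "\<forall>x :: nat \<Rightarrow> real. \<forall>k\<in>{1,2,3}. netvf F E G x k = GH a b c x k"
  have fin: "finite E"
    using assms(1) unfolding undirected_hypergraph3_def
    by (meson PowI finite_Pow_iff finite_insert finite.emptyI finite_subset subsetI)
  define S1 where "S1 p q = (\<Sum>A\<in>E. if 1 \<in> A then G A (p, (p, q, 0)) else 0)" for p q
  define S2 where "S2 p q = (\<Sum>A\<in>E. if 2 \<in> A then G A (q, (p, q, 0)) else 0)" for p q
  have e1: "F p + S1 p q = p + a * p ^ 3 + b * p * q ^ 2" for p q
  proof -
    have "netvf F E G (pt p q) 1 = GH a b c (pt p q) 1" using H by simp
    then show ?thesis unfolding netvf_def S1_def GH_def
      by (simp add: sum.inter_filter[OF fin] pt_def tup_def)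
  qed
  have e2: "F q + S2 p q = q + a * q ^ 3 + c * p ^ 2 * q" for p q
  proof -
    have "netvf F E G (pt p q) 2 = GH a b c (pt p q) 2" using H by simp
    then show ?thesis unfolding netvf_def S2_def GH_def
      by (simp add: sum.inter_filter[OF fin] pt_def tup_def)
  qed
  define t1 where "t1 A = G A (1,(1,1,0)) - G A (1,(1,0,0)) - G A (0,(0,1,0)) + G A (0,(0,0,0))" for A
  define t2 where "t2 A = G A (1,(1,1,0)) - G A (0,(1,0,0)) - G A (1,(0,1,0)) + G A (0,(0,0,0))" for A
  have d1: "S1 1 1 - S1 1 0 - S1 0 1 + S1 0 0 = (\<Sum>A\<in>E. if 1 \<in> A then t1 A else 0)"
    unfolding S1_def t1_def
    by (simp add: sum.distrib[symmetric] sum_subtractf[symmetric] if_distrib cong: if_cong)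
  have d2: "S2 1 1 - S2 1 0 - S2 0 1 + S2 0 0 = (\<Sum>A\<in>E. if 2 \<in> A then t2 A else 0)"
    unfolding S2_def t2_def
    by (simp add: sum.distrib[symmetric] sum_subtractf[symmetric] if_distrib cong: if_cong)
  have eq: "(\<Sum>A\<in>E. if 1 \<in> A then t1 A else 0) = (\<Sum>A\<in>E. if 2 \<in> A then t2 A else 0)"
  proof (rule sum.cong[OF refl])
    fix A assume AE: "A \<in> E"
    have cA: "coupling A (G A)" using assms(3) AE by blast
    have sub: "A \<subseteq> {1,2,3}" using assms(1) AE unfolding undirected_hypergraph3_def by blast
    show "(if 1 \<in> A then t1 A else 0) = (if 2 \<in> A then t2 A else 0)"
    proof (cases "1 \<in> A"; cases "2 \<in> A")
      assume h: "1 \<in> A" "2 \<in> A"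
      then have "G A (s, (0,1,0)) = G A (s, (1,0,0))" for s using swap12[OF cA] by blast
      then show ?thesis using h unfolding t1_def t2_def by simp
    next
      assume h: "1 \<in> A" "2 \<notin> A"
      have x: "\<forall>j\<in>A. st (r,1,0) j = st (r,0,0) j" for r using h sub by (auto simp: st_def)
      have "G A (u,(r,1,0)) = G A (u,(r,0,0))" for u r using loc[OF cA x] .
      then show ?thesis using h unfolding t1_def by simp
    next
      assume h: "1 \<notin> A" "2 \<in> A"
      have x: "\<forall>j\<in>A. st (1,r,0) j = st (0,r,0) j" for r using h sub by (auto simp: st_def)
      have "G A (u,(1,r,0)) = G A (u,(0,r,0))" for u r using loc[OF cA x] .
      then show ?thesis using h unfolding t2_def by simp
    next
      assume h: "1 \<notin> A" "2 \<notin> A"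
      then show ?thesis by simp
    qed
  qed
  have "S1 1 1 - S1 1 0 - S1 0 1 + S1 0 0 = b"
    using e1[of 1 1] e1[of 1 0] e1[of 0 1] e1[of 0 0] by simp
  moreover have "S2 1 1 - S2 1 0 - S2 0 1 + S2 0 0 = c"
    using e2[of 1 1] e2[of 1 0] e2[of 0 1] e2[of 0 0] by simp
  ultimately show False using d1 d2 eq assms(4) by simp
qed

end
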